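(* Let $f:[0,1]\to\mathbb{R}^{+}$ be a decreasing function with continuous first and second derivatives. Let $a,b>0$ and define $t(x)=1-a(1-x)\dfrac{f(x)}{f(x)+b}$. If $f''(x)\bigl(f(x)+b\bigr)\ge 2\bigl(f'(x)\bigr)^2$ for all $x$, then $t$ is concave. *)

theory Defs
  imports "HOL-Analysis.Analysis"
begin

end

theory Submission
  imports Defs
begin

lemma convex_Icc01_aux:
  fixes h h' :: "real \<Rightarrow> real"
  assumes cont: "continuous_on {0..1} h"
    and der: "\<And>x. 0 < x \<Longrightarrow> x < 1 \<Longrightarrow> (h has_real_derivative h' x) (at x)"
    and mono: "\<And>x y. 0 < x \<Longrightarrow> y < 1 \<Longrightarrow> x \<le> y \<Longrightarrow> h' x \<le> h' y"
  shows "convex_on {0..1} h"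
proof (rule convex_on_linorderI)
  show "convex {0..(1::real)}" by simp
next
  fix t x y :: real
  assume t: "t > 0" "t < 1"
  assume xy: "x \<in> {0..1}" "y \<in> {0..1}" "x < y"
  define z where "z = (1 - t) * x + t * y"
  from xy t have xz: "z > x"
    by (simp add: z_def algebra_simps)
  have "y - z = (1 - t) * (y - x)"
    by (simp add: z_def algebra_simps)
  also from xy t have "\<dots> > 0"
    by (intro mult_pos_pos) simp_all
  finally have yz: "z < y"
    by simp
  have c1: "continuous_on {x..z} h" using xy yz by (intro continuous_on_subset[OF cont]) auto
  have c2: "continuous_on {z..y} h" using xy xz by (intro continuous_on_subset[OF cont]) auto
  have d1: "h differentiable (at u)" if "x < u" "u < z" for u
    using der[of u] that xy yz real_differentiable_def by force
  have d2: "h differentiable (at u)" if "z < u" "u < y" for u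
    using der[of u] that xy xz real_differentiable_def by force
  obtain l1 \<xi> where \<xi>: "x < \<xi>" "\<xi> < z" "DERIV h \<xi> :> l1" "h z - h x = (z - x) * l1"
    using MVT[OF xz c1 d1] by blast
  obtain l2 \<eta> where \<eta>: "z < \<eta>" "\<eta> < y" "DERIV h \<eta> :> l2" "h y - h z = (y - z) * l2"
    using MVT[OF yz c2 d2] by blast
  have "DERIV h \<xi> :> h' \<xi>" using \<xi> xy yz by (intro der) auto
  hence l1: "l1 = h' \<xi>" using \<xi>(3) by (rule DERIV_unique[rotated])
  have "DERIV h \<eta> :> h' \<eta>" using \<eta> xy xz by (intro der) auto
  hence l2: "l2 = h' \<eta>" using \<eta>(3) by (rule DERIV_unique[rotated])
  have "h' \<xi> \<le> h' \<eta>" using \<xi> \<eta> xy by (intro mono) auto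
  hence "(h z - h x) * (y - z) \<le> (h y - h z) * (z - x)"
    unfolding \<xi>(4) \<eta>(4) l1 l2 using xz yz
    by (simp add: mult_left_mono mult.assoc mult.left_commute)
  also have "z - x = t * (y - x)"
    by (simp add: z_def algebra_simps)
  also have "y - z = (1 - t) * (y - x)"
    by (simp add: z_def algebra_simps)
  finally have "(h z - h x) * (1 - t) \<le> (h y - h z) * t"
    using xy by simp
  then show "h ((1 - t) *\<^sub>R x + t *\<^sub>R y) \<le> (1 - t) * h x + t * h y"
    by (simp add: z_def algebra_simps)
qed


theorem proposition2:
  fixes f f' f'' :: "real \<Rightarrow> real" and a b :: real
  assumes pos: "\<And>x. x \<in> {0..1} \<Longrightarrow> f x > 0"
    and decr: "\<And>x y. x \<in> {0..1} \<Longrightarrow> y \<in> {0..1} \<Longrightarrow> x \<le> y \<Longrightarrow> f y \<le> f x"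
    and d1: "\<And>x. x \<in> {0..1} \<Longrightarrow> (f has_real_derivative f' x) (at x within {0..1})"
    and d2: "\<And>x. x \<in> {0..1} \<Longrightarrow> (f' has_real_derivative f'' x) (at x within {0..1})"
    and c1: "continuous_on {0..1} f'"
    and c2: "continuous_on {0..1} f''"
    and ab: "a > 0" "b > 0"
    and ineq: "\<And>x. x \<in> {0..1} \<Longrightarrow> f'' x * (f x + b) \<ge> 2 * (f' x)\<^sup>2"
  shows "concave_on {0..1} (\<lambda>x. 1 - a * (1 - x) * (f x / (f x + b)))"
proof -
  define h where "h x = a * (1 - x) * (f x / (f x + b))" for x
  define h' where "h' x = a * (- (f x / (f x + b)) + (1 - x) * (b * f' x / (f x + b)^2))" for x
  define h'' where "h'' x = a * (- 2 * b * f' x / (f x + b)^2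
      + (1 - x) * b * (f'' x * (f x + b) - 2 * (f' x)^2) / (f x + b)^3)" for x
  have D1: "(f has_real_derivative f' x) (at x)" if "0 < x" "x < 1" for x
    using d1[of x] that by (simp add: at_within_Icc_at)
  have D2: "(f' has_real_derivative f'' x) (at x)" if "0 < x" "x < 1" for x
    using d2[of x] that by (simp add: at_within_Icc_at)
  have Fpos: "f x + b > 0" if "0 < x" "x < 1" for x
    using pos[of x] ab that by auto
  have fneg: "f' x \<le> 0" if x01: "0 < x" "x < 1" for x
  proof (rule ccontr)
    assume "\<not> f' x \<le> 0"
    then obtain d where d: "d > 0" "\<And>e. e > 0 \<Longrightarrow> e < d \<Longrightarrow> f x < f (x + e)"
      using DERIV_pos_inc_right[OF D1[OF x01]] by force
    define e where "e = min (d/2) ((1 - x)/2)"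
    have "e > 0" "e < d" using d x01 by (auto simp: e_def)
    hence "f x < f (x + e)" by (rule d(2))
    moreover have "f (x + e) \<le> f x" using x01 \<open>e > 0\<close> by (intro decr) (auto simp: e_def min_def field_simps)
    ultimately show False by simp
  qed
  have Dh: "(h has_real_derivative h' x) (at x)" if "0 < x" "x < 1" for x
  proof -
    have F: "f x + b \<noteq> 0" using Fpos[OF that] by simp
    show ?thesis
      unfolding h_def h'_def using D1[OF that] F
      apply (auto intro!: derivative_eq_intros)
      apply (simp add: divide_simps power2_eq_square)
      by algebra
  qed
  have Dh': "(h' has_real_derivative h'' x) (at x)" if "0 < x" "x < 1" for x
  proof -
    have F: "f x + b \<noteq> 0" using Fpos[OF that] by simp
    show ?thesis
      unfolding h''_def h'_def using D1[OF that] D2[OF that] F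
      apply (auto intro!: derivative_eq_intros)
      apply (simp add: divide_simps power2_eq_square power3_eq_cube)
      by algebra
  qed
  have h''pos: "h'' x \<ge> 0" if "0 < x" "x < 1" for x
  proof -
    have F: "f x + b > 0" using Fpos[OF that] .
    have t1: "- 2 * b * f' x / (f x + b)^2 \<ge> 0"
      using fneg[OF that] ab F by (intro divide_nonneg_pos) (auto simp: mult_nonneg_nonpos)
    have t2: "(1 - x) * b * (f'' x * (f x + b) - 2 * (f' x)^2) / (f x + b)^3 \<ge> 0"
      using ineq[of x] that ab F by (intro divide_nonneg_pos mult_nonneg_nonneg) auto
    show ?thesis unfolding h''_def using t1 t2 ab by simp
  qed
  have mono: "h' x \<le> h' y" if "0 < x" "y < 1" "x \<le> y" for x y
  proof (rule DERIV_nonneg_imp_increasing_open[OF that(3)])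
    fix u assume "x < u" "u < y"
    thus "\<exists>l. (h' has_real_derivative l) (at u) \<and> 0 \<le> l"
      using Dh' h''pos that by (meson less_trans less_le_trans le_less_trans)
  next
    show "continuous_on {x..y} h'"
    proof (intro continuous_at_imp_continuous_on ballI)
      fix u assume "u \<in> {x..y}"
      hence "0 < u" "u < 1" using that by auto
      thus "isCont h' u" using Dh' DERIV_isCont by blast
    qed
  qed
  have conth: "continuous_on {0..1} h"
  proof -
    have "continuous_on {0..1} f"
      using d1 by (meson has_field_derivative_imp_has_derivative has_derivative_continuous_on)
    moreover have "\<forall>x\<in>{0..1}. f x + b \<noteq> 0" using pos ab by (smt (verit))
    ultimately show ?thesis unfolding h_def
      by (auto intro!: continuous_intros)
  qed
  have "convex_on {0..1} h"
    by (rule convex_Icc01_aux[OF conth Dh mono])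
  hence "convex_on {0..1} (\<lambda>x. h x + (- 1))"
    by (intro convex_on_add) (auto simp: convex_on_const)
  thus ?thesis unfolding concave_on_def h_def by simp
qed

end
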